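(* Let $q_1,\dots,q_n\in(0,1)$ and let $X_1,\dots,X_n$ be independent with $\Pr(X_i=x)=(1-q_i)^xq_i$ for $x\in\mathbb{Z}_+$. Let $S_n=\sum_{i=1}^nX_i$ and $\lambda=E(S_n)=\sum_{i=1}^n\frac{1-q_i}{q_i}$. Then $K(X_i)=(1-q_i)^2/q_i$ for each $i$, and $$\|P_{S_n}-\mathrm{Po}(\lambda)\|_{\mathrm{TV}}\le\sqrt{\frac{2}{\lambda}\sum_{i=1}^n\frac{(1-q_i)^3}{q_i^2}}.$$ In particular, if $q_i=n/(n+\lambda)$ for all $i$ (for a given $\lambda>0$), then $\|P_{S_n}-\mathrm{Po}(\lambda)\|_{\mathrm{TV}}\le\frac{\sqrt2\,\lambda}{\sqrt{n(n+\lambda)}}\le\sqrt2\,\frac{\lambda}{n}$.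
   Context: $\|P-Q\|_{\mathrm{TV}}=\sum_x|P(x)-Q(x)|$; $\mathrm{Po}(\lambda)$ is the Poisson distribution with mean $\lambda$. For $X$ with distribution $P$ on $\mathbb{Z}_+$ and mean $m>0$, the scaled Fisher information is $K(X)=mE[\rho_X(X)^2]$ where $\rho_X(x)=\frac{(x+1)P(x+1)}{mP(x)}-1$. *)

theory Defs
  imports "HOL-Probability.Probability"
begin

text \<open>Total variation distance (paper's convention, without the factor 1/2)
  between two distributions on the nonnegative integers, given by their
  probability mass functions.\<close>
definition tv_nat :: "(nat \<Rightarrow> real) \<Rightarrow> (nat \<Rightarrow> real) \<Rightarrow> real" where
  "tv_nat P Q = (\<Sum>x. \<bar>P x - Q x\<bar>)"

definition scaled_fisher :: "'a measure \<Rightarrow> ('a \<Rightarrow> nat) \<Rightarrow> real" where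
  "scaled_fisher M Y =
     (let m = (\<integral>\<omega>. real (Y \<omega>) \<partial>M);
          P = (\<lambda>x. measure M {\<omega> \<in> space M. Y \<omega> = x});
          \<rho> = (\<lambda>x. real (x + 1) * P (x + 1) / (m * P x) - 1)
      in m * (\<integral>\<omega>. (\<rho> (Y \<omega>))\<^sup>2 \<partial>M))"

end

theory Submission
  imports Defs
begin
lemma ser1:
  fixes z :: real assumes "\<bar>z\<bar> < 1"
  shows "(\<lambda>a. real (Suc a) * z ^ a) sums (1 / (1 - z)\<^sup>2)"
proof -
  have s: "\<And>w::real. norm w < 1 \<Longrightarrow> (\<lambda>a. 1 * w ^ a) sums (1 / (1 - w))"
    subgoal for w using geometric_sums[of w] by simp done
  have d: "((\<lambda>w::real. 1 / (1 - w)) has_field_derivative (1 / (1 - z)\<^sup>2)) (at z)"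
    using assms by (auto intro!: derivative_eq_intros simp: power2_eq_square)
  have "(\<lambda>a. diffs (\<lambda>_. 1::real) a * z ^ a) sums (1 / (1 - z)\<^sup>2)"
    by (rule termdiffs_sums_strong[OF s d]) (use assms in auto)
  then show ?thesis by (simp add: diffs_def)
qed

lemma ser2:
  fixes z :: real assumes "\<bar>z\<bar> < 1"
  shows "(\<lambda>a. real (Suc a) * real (Suc (Suc a)) * z ^ a) sums (2 / (1 - z) ^ 3)"
proof -
  have s: "\<And>w::real. norm w < 1 \<Longrightarrow> (\<lambda>a. real (Suc a) * w ^ a) sums (1 / (1 - w)\<^sup>2)"
    using ser1 by auto
  have nz: "1 - z \<noteq> 0" using assms by auto
  have d0: "((\<lambda>w::real. 1 / (1 - w)\<^sup>2) has_field_derivative (2 * (1 - z) / ((1 - z)\<^sup>2)\<^sup>2)) (at z)"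
    using nz by (auto intro!: derivative_eq_intros)
  have e: "2 * (1 - z) / ((1 - z)\<^sup>2)\<^sup>2 = 2 / (1 - z) ^ 3"
  proof -
    have "((1 - z)\<^sup>2)\<^sup>2 = (1 - z) ^ 3 * (1 - z)" by (simp add: power2_eq_square power3_eq_cube)
    moreover have "2 * (1 - z) / ((1 - z) ^ 3 * (1 - z)) = 2 / (1 - z) ^ 3"
      using nz by (simp add: divide_simps)
    ultimately show ?thesis by simp
  qed
  have d: "((\<lambda>w::real. 1 / (1 - w)\<^sup>2) has_field_derivative (2 / (1 - z) ^ 3)) (at z)"
    using d0 e by simp
  have "(\<lambda>a. diffs (\<lambda>a. real (Suc a)) a * z ^ a) sums (2 / (1 - z) ^ 3)"
    by (rule termdiffs_sums_strong[OF s d]) (use assms in auto)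
  then show ?thesis by (simp add: diffs_def mult.commute)
qed

lemma sums_poly2:
  fixes q :: real and f :: "nat \<Rightarrow> real"
  assumes q: "0 < q" "q < 1"
    and f: "\<And>a. f a = \<alpha> * (real (Suc a) * real (Suc (Suc a))) + \<beta> * real (Suc a) + \<gamma>"
    and L: "L = q * (2 * \<alpha> / q ^ 3 + \<beta> / q\<^sup>2 + \<gamma> / q)"
  shows "(\<lambda>a. f a * ((1 - q) ^ a * q)) sums L"
proof -
  have r: "\<bar>1 - q\<bar> < 1" using q by auto
  have s2: "(\<lambda>a. real (Suc a) * real (Suc (Suc a)) * (1 - q) ^ a) sums (2 / q ^ 3)"
    using ser2[OF r] by simp
  have s1: "(\<lambda>a. real (Suc a) * (1 - q) ^ a) sums (1 / q\<^sup>2)"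
    using ser1[OF r] by simp
  have s0: "(\<lambda>a. (1 - q) ^ a) sums (1 / q)"
    using geometric_sums[OF r[unfolded real_norm_def[symmetric]]] by simp
  have "(\<lambda>a. q * (\<alpha> * (real (Suc a) * real (Suc (Suc a)) * (1 - q) ^ a) + \<beta> * (real (Suc a) * (1 - q) ^ a) + \<gamma> * (1 - q) ^ a))
     sums (q * (\<alpha> * (2 / q ^ 3) + \<beta> * (1 / q\<^sup>2) + \<gamma> * (1 / q)))"
    by (intro sums_mult sums_add s0 s1 s2)
  moreover have "(\<lambda>a. q * (\<alpha> * (real (Suc a) * real (Suc (Suc a)) * (1 - q) ^ a) + \<beta> * (real (Suc a) * (1 - q) ^ a) + \<gamma> * (1 - q) ^ a))
      = (\<lambda>a. f a * ((1 - q) ^ a * q))"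
    by (rule ext) (simp add: f algebra_simps)
  ultimately show ?thesis using L by (simp add: mult.commute)
qed

lemma geo_sum0:
  fixes q :: real assumes q: "0 < q" "q < 1"
  shows "(\<lambda>a. (1 - q) ^ a * q) sums 1"
  using sums_poly2[OF q, of "\<lambda>_. 1" 0 0 1 1] q by simp

lemma geo_sum_mean:
  fixes q :: real assumes q: "0 < q" "q < 1"
  shows "(\<lambda>a. real a * ((1 - q) ^ a * q)) sums ((1 - q) / q)"
  by (rule sums_poly2[OF q, of _ 0 1 "-1"]) (use q in \<open>auto simp: field_simps power2_eq_square\<close>)

lemma geo_sum_cmean:
  fixes q :: real assumes q: "0 < q" "q < 1"
  shows "(\<lambda>a. (real a - (1 - q) / q) * ((1 - q) ^ a * q)) sums 0"
  by (rule sums_poly2[OF q, of _ 0 1 "-1 - (1 - q) / q"]) (use q in \<open>auto simp: field_simps power2_eq_square\<close>)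

lemma geo_sum_var:
  fixes q :: real assumes q: "0 < q" "q < 1"
  shows "(\<lambda>a. (real a - (1 - q) / q)\<^sup>2 * ((1 - q) ^ a * q)) sums ((1 - q) / q\<^sup>2)"
  by (rule sums_poly2[OF q, of _ 1 "-3 - 2 * ((1 - q) / q)" "1 + 2 * ((1 - q) / q) + ((1 - q) / q)\<^sup>2"])
     (use q in \<open>auto simp: field_simps power2_eq_square power3_eq_cube\<close>)

lemma geo_sum_fisher:
  fixes q :: real assumes q: "0 < q" "q < 1"
  shows "(\<lambda>a. (real (Suc a) * q - 1)\<^sup>2 * ((1 - q) ^ a * q)) sums (1 - q)"
  by (rule sums_poly2[OF q, of _ "q\<^sup>2" "- q\<^sup>2 - 2 * q" 1])
     (use q in \<open>auto simp: field_simps power2_eq_square power3_eq_cube\<close>)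

lemma tri_swap:
  fixes h :: "nat \<Rightarrow> nat \<Rightarrow> real"
  shows "(\<Sum>x\<le>N. \<Sum>k\<in>{x..N}. h x k) = (\<Sum>k\<le>N. \<Sum>x\<le>k. h x k)"
proof (induction N)
  case 0 then show ?case by simp
next
  case (Suc N)
  have "(\<Sum>x\<le>Suc N. \<Sum>k\<in>{x..Suc N}. h x k) = (\<Sum>x\<le>N. \<Sum>k\<in>{x..Suc N}. h x k) + h (Suc N) (Suc N)"
    by simp
  also have "(\<Sum>x\<le>N. \<Sum>k\<in>{x..Suc N}. h x k) = (\<Sum>x\<le>N. (\<Sum>k\<in>{x..N}. h x k) + h x (Suc N))"
    by (rule sum.cong) (auto simp: atLeastAtMostSuc_conv)
  also have "\<dots> = (\<Sum>k\<le>N. \<Sum>x\<le>k. h x k) + (\<Sum>x\<le>N. h x (Suc N))"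
    by (simp add: sum.distrib Suc)
  finally show ?case by simp
qed

locale poi =
  fixes po :: "nat \<Rightarrow> real" and l :: real
  assumes l_pos: "l > 0" and po_nn: "\<And>k. po k \<ge> 0" and po_rec: "\<And>k. po (Suc k) * real (Suc k) = l * po k"
    and F_le: "\<And>N. (\<Sum>k\<le>N. po k) \<le> 1"
begin

definition F where "F N = (\<Sum>k\<le>N. po k)"

lemma xsum: "(\<Sum>x\<le>k. real x * po x) = l * (F k - po k)"
proof (induction k)
  case 0 then show ?case by (simp add: F_def)
next
  case (Suc k)
  have "(\<Sum>x\<le>Suc k. real x * po x) = l * (F k - po k) + real (Suc k) * po (Suc k)"
    using Suc by simp
  also have "real (Suc k) * po (Suc k) = l * po k" using po_rec[of k] by (simp add: mult.commute)
  finally show ?case by (simp add: F_def algebra_simps)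
qed

definition D where "D k N = (\<Sum>x\<le>k. \<Sum>y\<in>{k<..N}. po x * po y * (real y - real x))"

lemma D_Suc: "k \<le> N \<Longrightarrow> D k (Suc N) = D k N + (\<Sum>x\<le>k. po x * po (Suc N) * (real (Suc N) - real x))"
proof -
  assume "k \<le> N"
  then have "{k<..Suc N} = insert (Suc N) {k<..N}" by auto
  then show ?thesis by (simp add: D_def sum.distrib)
qed

lemma D_closed: "k \<le> N \<Longrightarrow> D k N = l * (po k * F N - F k * po N)"
proof (induction N rule: nat_induct_at_least)
  case base then show ?case by (simp add: D_def)
next
  case (Suc N)
  have "(\<Sum>x\<le>k. po x * po (Suc N) * (real (Suc N) - real x))
      = po (Suc N) * real (Suc N) * F k - po (Suc N) * (\<Sum>x\<le>k. real x * po x)"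
    by (simp add: F_def sum_distrib_left sum_subtractf sum.distrib algebra_simps)
  also have "\<dots> = l * po N * F k - po (Suc N) * (l * (F k - po k))"
    using po_rec[of N] by (simp add: xsum)
  finally have e: "(\<Sum>x\<le>k. po x * po (Suc N) * (real (Suc N) - real x)) = l * po N * F k - po (Suc N) * (l * (F k - po k))" .
  have "F (Suc N) = F N + po (Suc N)" by (simp add: F_def)
  then show ?case using D_Suc[OF Suc.hyps] Suc.IH e by (simp add: algebra_simps)
qed

lemma F_nn: "F k \<ge> 0" by (simp add: F_def sum_nonneg po_nn)

lemma D_le: "k \<le> N \<Longrightarrow> D k N \<le> l * po k"
proof -
  assume k: "k \<le> N"
  have "D k N = l * (po k * F N - F k * po N)" by (rule D_closed[OF k])
  also have "\<dots> \<le> l * (po k * F N)"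
    using l_pos F_nn[of k] po_nn[of N] by (intro mult_left_mono) auto
  also have "\<dots> \<le> l * po k"
    using l_pos po_nn[of k] F_le[of N] unfolding F_def
    by (intro mult_left_mono) (auto intro: mult_left_le)
  finally show ?thesis .
qed

lemma phi_eq:
  "F N * (\<Sum>x\<le>N. po x * (u x)\<^sup>2) - (\<Sum>x\<le>N. po x * u x)\<^sup>2
     = (\<Sum>y\<le>N. \<Sum>x<y. po x * po y * (u y - u x)\<^sup>2)"
proof (induction N)
  case 0 then show ?case by (simp add: F_def power2_eq_square)
next
  case (Suc N)
  define p where "p = po (Suc N)"
  define v where "v = u (Suc N)"
  define A where "A = (\<Sum>x\<le>N. po x * (u x)\<^sup>2)"
  define B where "B = (\<Sum>x\<le>N. po x * u x)"
  have inc: "(\<Sum>x<Suc N. po x * p * (v - u x)\<^sup>2) = p * (F N * v\<^sup>2 - 2 * v * B + A)"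
    unfolding lessThan_Suc_atMost F_def A_def B_def
    by (simp add: power2_eq_square sum_distrib_left sum_distrib_right sum_subtractf sum.distrib algebra_simps)
  have "F (Suc N) * (\<Sum>x\<le>Suc N. po x * (u x)\<^sup>2) - (\<Sum>x\<le>Suc N. po x * u x)\<^sup>2
      = (F N + p) * (A + p * v\<^sup>2) - (B + p * v)\<^sup>2"
    by (simp add: F_def A_def B_def p_def v_def)
  also have "\<dots> = (F N * A - B\<^sup>2) + p * (F N * v\<^sup>2 - 2 * v * B + A)"
    by (simp add: power2_eq_square algebra_simps)
  also have "\<dots> = (\<Sum>y\<le>Suc N. \<Sum>x<y. po x * po y * (u y - u x)\<^sup>2)"
    using Suc.IH inc by (simp add: A_def B_def p_def v_def)
  finally show ?case .
qed

lemma L_eq: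
  fixes d :: "nat \<Rightarrow> real"
  shows "(\<Sum>y\<le>N. \<Sum>x<y. po x * po y * (real y - real x) * (\<Sum>k\<in>{x..<y}. (d k)\<^sup>2))
     = (\<Sum>k<N. (d k)\<^sup>2 * D k N)"
proof (induction N)
  case 0 then show ?case by simp
next
  case (Suc N)
  define h where "h x k = po x * po (Suc N) * (real (Suc N) - real x) * (d k)\<^sup>2" for x k
  have "(\<Sum>x<Suc N. po x * po (Suc N) * (real (Suc N) - real x) * (\<Sum>k\<in>{x..<Suc N}. (d k)\<^sup>2))
       = (\<Sum>x\<le>N. \<Sum>k\<in>{x..N}. h x k)"
    unfolding lessThan_Suc_atMost h_def
    by (rule sum.cong) (auto simp: sum_distrib_left atLeastLessThanSuc_atLeastAtMost)
  also have "\<dots> = (\<Sum>k\<le>N. \<Sum>x\<le>k. h x k)" by (rule tri_swap)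
  finally have e1: "(\<Sum>x<Suc N. po x * po (Suc N) * (real (Suc N) - real x) * (\<Sum>k\<in>{x..<Suc N}. (d k)\<^sup>2))
       = (\<Sum>k\<le>N. \<Sum>x\<le>k. h x k)" .
  have e2: "(\<Sum>k<Suc N. (d k)\<^sup>2 * D k (Suc N)) = (\<Sum>k\<le>N. (d k)\<^sup>2 * D k N + (\<Sum>x\<le>k. h x k))"
    unfolding lessThan_Suc_atMost
    by (rule sum.cong) (auto simp: D_Suc h_def sum_distrib_left algebra_simps)
  have e3: "(\<Sum>k\<le>N. (d k)\<^sup>2 * D k N) = (\<Sum>k<N. (d k)\<^sup>2 * D k N)"
    by (simp add: lessThan_Suc_atMost[symmetric] D_def)
  show ?case using Suc.IH e1 e2 e3 by (simp add: sum.distrib)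
qed

lemma cs_seg:
  fixes u :: "nat \<Rightarrow> real"
  assumes "x \<le> y"
  shows "(u y - u x)\<^sup>2 \<le> (real y - real x) * (\<Sum>k\<in>{x..<y}. (u (Suc k) - u k)\<^sup>2)"
proof -
  have "u y - u x = (\<Sum>k\<in>{x..<y}. 1 * (u (Suc k) - u k))"
    using sum_Suc_diff'[OF assms, of u] by simp
  then have "(u y - u x)\<^sup>2 \<le> (\<Sum>k\<in>{x..<y}. 1\<^sup>2) * (\<Sum>k\<in>{x..<y}. (u (Suc k) - u k)\<^sup>2)"
    using Cauchy_Schwarz_ineq_sum[of "\<lambda>_. 1" "\<lambda>k. u (Suc k) - u k" "{x..<y}"] by simp
  also have "(\<Sum>k\<in>{x..<y}. (1::real)\<^sup>2) = real y - real x" using assms by simp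
  finally show ?thesis .
qed

lemma poincare:
  fixes u :: "nat \<Rightarrow> real"
  shows "F N * (\<Sum>x\<le>N. po x * (u x)\<^sup>2) - (\<Sum>x\<le>N. po x * u x)\<^sup>2
     \<le> (\<Sum>k<N. l * po k * (u (Suc k) - u k)\<^sup>2)"
proof -
  have "F N * (\<Sum>x\<le>N. po x * (u x)\<^sup>2) - (\<Sum>x\<le>N. po x * u x)\<^sup>2
      = (\<Sum>y\<le>N. \<Sum>x<y. po x * po y * (u y - u x)\<^sup>2)" by (rule phi_eq)
  also have "\<dots> \<le> (\<Sum>y\<le>N. \<Sum>x<y. po x * po y * ((real y - real x) * (\<Sum>k\<in>{x..<y}. (u (Suc k) - u k)\<^sup>2)))"
    by (intro sum_mono mult_left_mono cs_seg) (auto intro: mult_nonneg_nonneg po_nn)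
  also have "\<dots> = (\<Sum>k<N. (u (Suc k) - u k)\<^sup>2 * D k N)"
    using L_eq[of "\<lambda>k. u (Suc k) - u k" N] by (simp add: mult.assoc)
  also have "\<dots> \<le> (\<Sum>k<N. (u (Suc k) - u k)\<^sup>2 * (l * po k))"
    by (intro sum_mono mult_left_mono D_le) auto
  finally show ?thesis by (simp add: mult_ac)
qed

end

lemma poisson_tv_bound:
  fixes P :: "nat \<Rightarrow> real" and l R :: real
  assumes l: "l > 0" and P0: "\<And>k. P k \<ge> 0" and Psum: "P sums 1"
    and bnd: "\<And>N. (\<Sum>k<N. (sqrt (real (Suc k) * P (Suc k)) - sqrt (l * P k))\<^sup>2) \<le> R"
  shows "tv_nat P (pmf (poisson_pmf l)) \<le> 2 * sqrt R"
proof -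
  define po where "po k = l ^ k / fact k * exp (- l)" for k
  have pmfeq: "pmf (poisson_pmf l) = po" using l by (auto simp: po_def)
  have po_pos: "po k > 0" for k using l by (simp add: po_def)
  have po_rec: "po (Suc k) * real (Suc k) = l * po k" for k
  proof -
    have f: "(fact (Suc k)::real) = real (Suc k) * fact k" by (rule fact_Suc)
    have "real (Suc k) > 0" by simp
    then show ?thesis unfolding po_def f by (simp del: of_nat_Suc add: field_simps)
  qed
  have po_sums: "po sums 1"
  proof -
    have "(\<lambda>n. l ^ n / fact n) sums exp l"
      using exp_converges[of l] by (simp add: scaleR_conv_of_real divide_inverse mult.commute)
    then have "(\<lambda>n. l ^ n / fact n * exp (- l)) sums (exp l * exp (- l))" by (rule sums_mult2)
    moreover have "po = (\<lambda>n. l ^ n / fact n * exp (- l))" by (rule ext) (simp add: po_def)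
    ultimately show ?thesis by (simp add: exp_minus_inverse)
  qed
  have F_le: "(\<Sum>k\<le>N. po k) \<le> 1" for N
    using sum_le_suminf[of po "{..N}"] po_sums po_pos by (auto simp: sums_iff less_imp_le)
  interpret poi po l
    by unfold_locales (use l po_pos po_rec F_le in \<open>auto simp: less_imp_le\<close>)
  define u where "u k = sqrt (P k / po k)" for k
  have u2: "po k * (u k)\<^sup>2 = P k" for k
    using po_pos[of k] P0[of k] by (simp add: u_def)
  have u1: "po k * u k = sqrt (P k * po k)" for k
  proof -
    have "po k * u k = sqrt ((po k)\<^sup>2) * sqrt (P k / po k)"
      using po_pos[of k] by (simp add: u_def)
    also have "\<dots> = sqrt ((po k)\<^sup>2 * (P k / po k))" by (rule real_sqrt_mult[symmetric])
    also have "(po k)\<^sup>2 * (P k / po k) = P k * po k"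
      using po_pos[of k] by (simp add: power2_eq_square)
    finally show ?thesis .
  qed
  have ud: "l * po k * (u (Suc k) - u k)\<^sup>2 = (sqrt (real (Suc k) * P (Suc k)) - sqrt (l * P k))\<^sup>2" for k
  proof -
    have s0: "l * po k \<ge> 0" using l po_pos[of k] by simp
    have a: "sqrt (l * po k) * u (Suc k) = sqrt (real (Suc k) * P (Suc k))"
    proof -
      have "sqrt (l * po k) * u (Suc k) = sqrt (l * po k * (P (Suc k) / po (Suc k)))"
        unfolding u_def by (rule real_sqrt_mult[symmetric])
      also have "l * po k * (P (Suc k) / po (Suc k)) = real (Suc k) * P (Suc k)"
      proof -
        have "l * po k * (P (Suc k) / po (Suc k)) = po (Suc k) * real (Suc k) * (P (Suc k) / po (Suc k))"
          using po_rec[of k] by simp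
        also have "\<dots> = real (Suc k) * P (Suc k)" using po_pos[of "Suc k"] by (simp del: of_nat_Suc)
        finally show ?thesis .
      qed
      finally show ?thesis .
    qed
    have b: "sqrt (l * po k) * u k = sqrt (l * P k)"
    proof -
      have "sqrt (l * po k) * u k = sqrt (l * po k * (P k / po k))"
        unfolding u_def by (rule real_sqrt_mult[symmetric])
      also have "l * po k * (P k / po k) = l * P k"
        using po_pos[of k] by (simp add: field_simps)
      finally show ?thesis .
    qed
    have "l * po k * (u (Suc k) - u k)\<^sup>2 = (sqrt (l * po k))\<^sup>2 * (u (Suc k) - u k)\<^sup>2"
      using s0 by simp
    also have "\<dots> = (sqrt (l * po k) * u (Suc k) - sqrt (l * po k) * u k)\<^sup>2"
      by (simp add: power2_eq_square algebra_simps)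
    finally show ?thesis using a b by simp
  qed
  define Bs where "Bs = (\<Sum>k. sqrt (P k * po k))"
  have Bsum: "summable (\<lambda>k. sqrt (P k * po k))"
  proof (rule summable_comparison_test)
    show "\<exists>N. \<forall>n\<ge>N. norm (sqrt (P n * po n)) \<le> (P n + po n) / 2"
    proof (intro exI allI impI)
      fix n
      have "sqrt (P n * po n) \<le> (P n + po n) / 2"
        using arith_geo_mean_sqrt[of "P n" "po n"] P0[of n] po_pos[of n] by simp
      moreover have "sqrt (P n * po n) \<ge> 0" using P0[of n] po_pos[of n] by simp
      ultimately show "norm (sqrt (P n * po n)) \<le> (P n + po n) / 2" by simp
    qed
    show "summable (\<lambda>n. (P n + po n) / 2)"
      using Psum po_sums by (intro summable_divide summable_add) (auto simp: sums_iff)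
  qed
  have limF: "(\<lambda>N. \<Sum>k\<le>N. po k) \<longlonglongrightarrow> 1" using po_sums by (simp add: sums_def_le)
  have limA: "(\<lambda>N. \<Sum>k\<le>N. P k) \<longlonglongrightarrow> 1" using Psum by (simp add: sums_def_le)
  have limB: "(\<lambda>N. \<Sum>k\<le>N. sqrt (P k * po k)) \<longlonglongrightarrow> Bs"
    using Bsum unfolding Bs_def by (simp add: summable_sums sums_def_le[symmetric])
  have phi_le: "(\<Sum>k\<le>N. po k) * (\<Sum>k\<le>N. P k) - (\<Sum>k\<le>N. sqrt (P k * po k))\<^sup>2 \<le> R" for N
  proof -
    have "(\<Sum>k\<le>N. po k) * (\<Sum>k\<le>N. P k) - (\<Sum>k\<le>N. sqrt (P k * po k))\<^sup>2
        = F N * (\<Sum>x\<le>N. po x * (u x)\<^sup>2) - (\<Sum>x\<le>N. po x * u x)\<^sup>2"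
      by (simp add: F_def u1 u2)
    also have "\<dots> \<le> (\<Sum>k<N. l * po k * (u (Suc k) - u k)\<^sup>2)" by (rule poincare)
    also have "\<dots> = (\<Sum>k<N. (sqrt (real (Suc k) * P (Suc k)) - sqrt (l * P k))\<^sup>2)"
      by (simp add: ud)
    also have "\<dots> \<le> R" by (rule bnd)
    finally show ?thesis .
  qed
  have "(\<lambda>N. (\<Sum>k\<le>N. po k) * (\<Sum>k\<le>N. P k) - (\<Sum>k\<le>N. sqrt (P k * po k))\<^sup>2) \<longlonglongrightarrow> 1 * 1 - Bs\<^sup>2"
    by (intro tendsto_intros limF limA limB)
  then have key: "1 - Bs\<^sup>2 \<le> R"
    using phi_le by (intro LIMSEQ_le_const2[where a = R]) auto
  have absP: "\<bar>P k - po k\<bar> = \<bar>sqrt (P k) - sqrt (po k)\<bar> * (sqrt (P k) + sqrt (po k))" for k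
  proof -
    have "P k - po k = (sqrt (P k) - sqrt (po k)) * (sqrt (P k) + sqrt (po k))"
      using P0[of k] po_pos[of k] by (simp add: algebra_simps)
    moreover have "sqrt (P k) + sqrt (po k) \<ge> 0" using P0[of k] po_pos[of k] by simp
    ultimately show ?thesis by (simp add: abs_mult)
  qed
  have Tle: "(\<Sum>k\<le>N. \<bar>P k - po k\<bar>) \<le> sqrt (((\<Sum>k\<le>N. P k) + (\<Sum>k\<le>N. po k))\<^sup>2 - 4 * (\<Sum>k\<le>N. sqrt (P k * po k))\<^sup>2)" for N
  proof (rule real_le_rsqrt)
    define a where "a k = sqrt (P k)" for k
    define b where "b k = sqrt (po k)" for k
    have ab: "a k * b k = sqrt (P k * po k)" for k by (simp add: a_def b_def real_sqrt_mult)
    have a2: "(a k)\<^sup>2 = P k" for k using P0[of k] by (simp add: a_def)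
    have b2: "(b k)\<^sup>2 = po k" for k using po_pos[of k] by (simp add: b_def)
    have "(\<Sum>k\<le>N. \<bar>P k - po k\<bar>)\<^sup>2 = (\<Sum>k\<le>N. \<bar>a k - b k\<bar> * (a k + b k))\<^sup>2"
      by (simp add: absP a_def b_def)
    also have "\<dots> \<le> (\<Sum>k\<le>N. \<bar>a k - b k\<bar>\<^sup>2) * (\<Sum>k\<le>N. (a k + b k)\<^sup>2)"
      by (rule Cauchy_Schwarz_ineq_sum)
    also have "(\<Sum>k\<le>N. \<bar>a k - b k\<bar>\<^sup>2) = (\<Sum>k\<le>N. P k) + (\<Sum>k\<le>N. po k) - 2 * (\<Sum>k\<le>N. sqrt (P k * po k))"
      by (simp add: power2_eq_square[symmetric] power2_diff a2 b2 ab sum.distrib sum_subtractf sum_distrib_left mult.assoc)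
    also have "(\<Sum>k\<le>N. (a k + b k)\<^sup>2) = (\<Sum>k\<le>N. P k) + (\<Sum>k\<le>N. po k) + 2 * (\<Sum>k\<le>N. sqrt (P k * po k))"
      by (simp add: power2_sum a2 b2 ab sum.distrib sum_distrib_left mult.assoc)
    finally show "(\<Sum>k\<le>N. \<bar>P k - po k\<bar>)\<^sup>2 \<le> ((\<Sum>k\<le>N. P k) + (\<Sum>k\<le>N. po k))\<^sup>2 - 4 * (\<Sum>k\<le>N. sqrt (P k * po k))\<^sup>2"
      by (simp add: power2_eq_square algebra_simps)
  qed
  have Tsum: "summable (\<lambda>k. \<bar>P k - po k\<bar>)"
  proof (rule summable_comparison_test)
    show "\<exists>N. \<forall>n\<ge>N. norm \<bar>P n - po n\<bar> \<le> P n + po n"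
      using P0 po_pos by (auto intro!: exI[of _ 0] simp: abs_le_iff less_imp_le)
    show "summable (\<lambda>n. P n + po n)"
      using Psum po_sums by (intro summable_add) (auto simp: sums_iff)
  qed
  have limT: "(\<lambda>N. \<Sum>k\<le>N. \<bar>P k - po k\<bar>) \<longlonglongrightarrow> (\<Sum>k. \<bar>P k - po k\<bar>)"
    using Tsum by (simp add: summable_sums sums_def_le[symmetric])
  have limS: "(\<lambda>N. sqrt (((\<Sum>k\<le>N. P k) + (\<Sum>k\<le>N. po k))\<^sup>2 - 4 * (\<Sum>k\<le>N. sqrt (P k * po k))\<^sup>2))
      \<longlonglongrightarrow> sqrt ((1 + 1)\<^sup>2 - 4 * Bs\<^sup>2)"
    by (intro tendsto_intros limF limA limB)
  have "(\<Sum>k. \<bar>P k - po k\<bar>) \<le> sqrt ((1 + 1)\<^sup>2 - 4 * Bs\<^sup>2)"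
    by (rule LIMSEQ_le[OF limT limS]) (use Tle in auto)
  also have "sqrt ((1 + 1)\<^sup>2 - 4 * Bs\<^sup>2) = 2 * sqrt (1 - Bs\<^sup>2)"
  proof -
    have "sqrt ((1 + 1)\<^sup>2 - 4 * Bs\<^sup>2) = sqrt (2\<^sup>2 * (1 - Bs\<^sup>2))"
      by (rule arg_cong[where f = sqrt]) (simp add: algebra_simps power2_eq_square)
    also have "\<dots> = sqrt (2\<^sup>2) * sqrt (1 - Bs\<^sup>2)" by (rule real_sqrt_mult)
    finally show ?thesis by simp
  qed
  also have "\<dots> \<le> 2 * sqrt R" using key by simp
  finally show ?thesis by (simp add: tv_nat_def pmfeq)
qed

locale geo =
  fixes M :: "'a measure" and X :: "nat \<Rightarrow> 'a \<Rightarrow> nat" and q :: "nat \<Rightarrow> real" and n :: nat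
  assumes PS: "prob_space M" and n1: "n \<ge> 1"
    and q01: "\<forall>i\<in>{1..n}. 0 < q i \<and> q i < 1"
    and indep: "prob_space.indep_vars M (\<lambda>_. count_space UNIV) X {1..n}"
    and geom: "\<forall>i\<in>{1..n}. \<forall>x::nat. measure M {\<omega> \<in> space M. X i \<omega> = x} = (1 - q i) ^ x * q i"
begin

sublocale prob_space M by (rule PS)

definition pg :: "nat \<Rightarrow> nat \<Rightarrow> real" where "pg i a = (1 - q i) ^ a * q i"
definition pp :: "(nat \<Rightarrow> nat) \<Rightarrow> real" where "pp x = (\<Prod>i\<in>{1..n}. pg i (x i))"
definition Tk :: "nat \<Rightarrow> (nat \<Rightarrow> nat) set" where
  "Tk k = {x \<in> PiE {1..n} (\<lambda>_. UNIV). sum x {1..n} = k}"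
definition Ev :: "(nat \<Rightarrow> nat) \<Rightarrow> 'a set" where "Ev x = {\<omega> \<in> space M. \<forall>i\<in>{1..n}. X i \<omega> = x i}"
definition Pk :: "nat \<Rightarrow> real" where "Pk k = measure M {\<omega> \<in> space M. (\<Sum>i\<in>{1..n}. X i \<omega>) = k}"

lemma qi: "i \<in> {1..n} \<Longrightarrow> 0 < q i \<and> q i < 1" using q01 by auto

lemma rv: "i \<in> {1..n} \<Longrightarrow> X i \<in> measurable M (count_space UNIV)"
  using indep unfolding indep_vars_def by auto

lemma pg_pos: "i \<in> {1..n} \<Longrightarrow> pg i a > 0" using qi[of i] by (simp add: pg_def)

lemma pp_pos: "pp x > 0" unfolding pp_def by (rule prod_pos) (simp add: pg_pos)

lemma pp_upd: assumes i: "i \<in> {1..n}" shows "pp (x(i := x i + 1)) = (1 - q i) * pp x"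
proof -
  have "pp (x(i := x i + 1)) = pg i (x i + 1) * (\<Prod>j\<in>{1..n} - {i}. pg j (x j))"
    unfolding pp_def using i by (subst prod.remove[of _ i]) (auto intro!: prod.cong)
  also have "pg i (x i + 1) = (1 - q i) * pg i (x i)" by (simp add: pg_def)
  also have "(1 - q i) * pg i (x i) * (\<Prod>j\<in>{1..n} - {i}. pg j (x j)) = (1 - q i) * pp x"
    unfolding pp_def using i by (subst (2) prod.remove[of _ i]) auto
  finally show ?thesis .
qed

lemma Tk_sub: "Tk k \<subseteq> PiE {1..n} (\<lambda>_. {..k})"
proof
  fix x assume x: "x \<in> Tk k"
  then have "\<And>i. i \<in> {1..n} \<Longrightarrow> x i \<le> k"
    unfolding Tk_def using member_le_sum[of _ "{1..n}" x] by fastforce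
  with x show "x \<in> PiE {1..n} (\<lambda>_. {..k})" unfolding Tk_def by (auto simp: PiE_def Pi_def)
qed

lemma Tk_fin: "finite (Tk k)"
  by (rule finite_subset[OF Tk_sub]) (simp add: finite_PiE)

lemma Ev_sets: "Ev x \<in> sets M"
proof -
  have "Ev x = (\<Inter>i\<in>{1..n}. X i -` {x i} \<inter> space M)" using n1 by (auto simp: Ev_def)
  also have "\<dots> \<in> sets M"
    using n1 by (intro sets.finite_INT) (auto intro: measurable_sets[OF rv])
  finally show ?thesis .
qed

lemma prob_Ev: "measure M (Ev x) = pp x"
proof -
  have "Ev x = (\<Inter>i\<in>{1..n}. X i -` {x i} \<inter> space M)" using n1 by (auto simp: Ev_def)
  moreover have "measure M (\<Inter>i\<in>{1..n}. X i -` {x i} \<inter> space M) = (\<Prod>i\<in>{1..n}. measure M (X i -` {x i} \<inter> space M))"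
    by (rule indep_varsD[OF indep]) (use n1 in auto)
  ultimately have "measure M (Ev x) = (\<Prod>i\<in>{1..n}. measure M (X i -` {x i} \<inter> space M))"
    by simp
  also have "\<dots> = pp x"
    unfolding pp_def
  proof (rule prod.cong)
    fix i assume i: "i \<in> {1..n}"
    have "X i -` {x i} \<inter> space M = {\<omega> \<in> space M. X i \<omega> = x i}" by auto
    then show "measure M (X i -` {x i} \<inter> space M) = pg i (x i)" using geom i by (simp add: pg_def)
  qed simp
  finally show ?thesis .
qed

lemma Pk_eq: "Pk k = (\<Sum>x\<in>Tk k. pp x)"
proof -
  have U: "{\<omega> \<in> space M. (\<Sum>i\<in>{1..n}. X i \<omega>) = k} = (\<Union>x\<in>Tk k. Ev x)"
  proof (intro equalityI subsetI)
    fix \<omega> assume w: "\<omega> \<in> {\<omega> \<in> space M. (\<Sum>i\<in>{1..n}. X i \<omega>) = k}"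
    define x where "x = restrict (\<lambda>i. X i \<omega>) {1..n}"
    have "x \<in> Tk k" using w unfolding Tk_def x_def by auto
    moreover have "\<omega> \<in> Ev x" using w unfolding Ev_def x_def by auto
    ultimately show "\<omega> \<in> (\<Union>x\<in>Tk k. Ev x)" by blast
  next
    fix \<omega> assume "\<omega> \<in> (\<Union>x\<in>Tk k. Ev x)"
    then obtain x where x: "x \<in> Tk k" "\<omega> \<in> Ev x" by blast
    then have "(\<Sum>i\<in>{1..n}. X i \<omega>) = sum x {1..n}" unfolding Ev_def by (auto intro!: sum.cong)
    then show "\<omega> \<in> {\<omega> \<in> space M. (\<Sum>i\<in>{1..n}. X i \<omega>) = k}" using x unfolding Ev_def Tk_def by auto
  qed
  have disj: "disjoint_family_on Ev (Tk k)"
    unfolding disjoint_family_on_def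
  proof (intro ballI impI)
    fix x y assume xy: "x \<in> Tk k" "y \<in> Tk k" "x \<noteq> y"
    then obtain i where "i \<in> {1..n}" "x i \<noteq> y i"
      unfolding Tk_def by (metis (mono_tags, lifting) PiE_ext mem_Collect_eq)
    then show "Ev x \<inter> Ev y = {}" unfolding Ev_def by auto
  qed
  have "Pk k = measure M (\<Union>x\<in>Tk k. Ev x)" unfolding Pk_def U ..
  also have "\<dots> = (\<Sum>x\<in>Tk k. measure M (Ev x))"
    by (rule finite_measure_finite_Union[OF Tk_fin _ disj]) (auto intro: Ev_sets)
  also have "\<dots> = (\<Sum>x\<in>Tk k. pp x)" by (simp add: prob_Ev)
  finally show ?thesis .
qed

lemma Tk_ne: "Tk k \<noteq> {}"
proof -
  define x where "x = restrict (\<lambda>i. if i = 1 then k else 0) {1..n}"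
  have "sum x {1..n} = (\<Sum>i\<in>{1..n}. if i = 1 then k else 0)" unfolding x_def by (rule sum.cong) auto
  also have "\<dots> = k" using n1 by (simp add: sum.delta)
  finally have "x \<in> Tk k" unfolding Tk_def x_def by auto
  then show ?thesis by blast
qed

lemma Pk_pos: "Pk k > 0"
  unfolding Pk_eq using Tk_fin Tk_ne pp_pos by (intro sum_pos) auto

end

context geo begin

lemma sum_upd: assumes "i \<in> {1..n}" shows "sum (x(i := v)) {1..n} = v + sum x ({1..n} - {i})"
  using assms by (subst sum.remove[of _ i]) (auto intro!: sum.cong)

lemma sum_rem: assumes "i \<in> {1..n}" shows "sum x {1..n} = x i + sum x ({1..n} - {i})"
  using assms by (subst sum.remove[of _ i]) auto

lemma stein_i:
  assumes i: "i \<in> {1..n}"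
  shows "(\<Sum>y\<in>Tk (Suc k). real (y i) * pp y) = (1 - q i) * (\<Sum>x\<in>Tk k. real (x i + 1) * pp x)"
proof -
  define g where "g x = x(i := x i + 1)" for x :: "nat \<Rightarrow> nat"
  have inj: "inj_on g (Tk k)"
  proof (rule inj_onI)
    fix x y assume "g x = g y"
    then have "\<And>j. (g x) j = (g y) j" by simp
    then show "x = y" unfolding g_def by (metis fun_upd_other fun_upd_same add_right_cancel ext)
  qed
  have img: "g ` Tk k = {y \<in> Tk (Suc k). y i \<noteq> 0}"
  proof (intro equalityI subsetI)
    fix y assume "y \<in> g ` Tk k"
    then obtain x where x: "x \<in> Tk k" "y = g x" by blast
    have "sum y {1..n} = Suc k"
      using x i sum_upd[OF i, of x "x i + 1"] sum_rem[OF i, of x] unfolding g_def Tk_def by auto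
    moreover have "y \<in> PiE {1..n} (\<lambda>_. UNIV)" using x i unfolding g_def Tk_def by (auto simp: PiE_def extensional_def)
    ultimately show "y \<in> {y \<in> Tk (Suc k). y i \<noteq> 0}" using x unfolding g_def Tk_def by auto
  next
    fix y assume y: "y \<in> {y \<in> Tk (Suc k). y i \<noteq> 0}"
    define x where "x = y(i := y i - 1)"
    have "sum x {1..n} = k"
      using y i sum_upd[OF i, of y "y i - 1"] sum_rem[OF i, of y] unfolding x_def Tk_def by auto
    moreover have "x \<in> PiE {1..n} (\<lambda>_. UNIV)" using y i unfolding x_def Tk_def by (auto simp: PiE_def extensional_def)
    ultimately have "x \<in> Tk k" unfolding Tk_def by auto
    moreover have "g x = y" using y unfolding g_def x_def by auto
    ultimately show "y \<in> g ` Tk k" by blast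
  qed
  have "(1 - q i) * (\<Sum>x\<in>Tk k. real (x i + 1) * pp x) = (\<Sum>x\<in>Tk k. real ((g x) i) * pp (g x))"
    unfolding sum_distrib_left
  proof (rule sum.cong)
    fix x
    have "pp (g x) = (1 - q i) * pp x" unfolding g_def by (rule pp_upd[OF i])
    moreover have "(g x) i = x i + 1" unfolding g_def by simp
    ultimately show "(1 - q i) * (real (x i + 1) * pp x) = real ((g x) i) * pp (g x)" by simp
  qed simp
  also have "\<dots> = (\<Sum>y\<in>g ` Tk k. real (y i) * pp y)"
    by (rule sum.reindex[OF inj, symmetric, unfolded comp_def])
  also have "\<dots> = (\<Sum>y\<in>Tk (Suc k). real (y i) * pp y)"
    unfolding img by (rule sum.mono_neutral_left) (auto simp: Tk_fin)
  finally show ?thesis by simp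
qed

lemma stein:
  "real (Suc k) * Pk (Suc k) = (\<Sum>x\<in>Tk k. (\<Sum>i\<in>{1..n}. (1 - q i) * real (x i + 1)) * pp x)"
proof -
  have "real (Suc k) * Pk (Suc k) = (\<Sum>y\<in>Tk (Suc k). real (sum y {1..n}) * pp y)"
    unfolding Pk_eq sum_distrib_left by (rule sum.cong) (auto simp: Tk_def)
  also have "\<dots> = (\<Sum>i\<in>{1..n}. \<Sum>y\<in>Tk (Suc k). real (y i) * pp y)"
    by (simp add: sum_distrib_right sum.swap[of _ "Tk (Suc k)"])
  also have "\<dots> = (\<Sum>i\<in>{1..n}. (1 - q i) * (\<Sum>x\<in>Tk k. real (x i + 1) * pp x))"
    by (rule sum.cong) (auto simp: stein_i)
  also have "\<dots> = (\<Sum>x\<in>Tk k. (\<Sum>i\<in>{1..n}. (1 - q i) * real (x i + 1)) * pp x)"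
    by (simp add: sum_distrib_left sum_distrib_right sum.swap[of _ "Tk k"] mult_ac)
  finally show ?thesis .
qed

definition mm :: "nat \<Rightarrow> real" where "mm i = (1 - q i) / q i"
definition lam :: real where "lam = (\<Sum>i\<in>{1..n}. mm i)"
definition w :: "(nat \<Rightarrow> nat) \<Rightarrow> real" where "w x = (\<Sum>i\<in>{1..n}. (1 - q i) * (real (x i) - mm i))"
definition Aw :: real where "Aw = (\<Sum>i\<in>{1..n}. (1 - q i) * mm i)"
definition V :: real where "V = (\<Sum>i\<in>{1..n}. (1 - q i) ^ 3 / (q i)\<^sup>2)"

lemma Tdef: "real (Suc k) * Pk (Suc k) - lam * Pk k = (\<Sum>x\<in>Tk k. w x * pp x)"
proof -
  have e: "(\<Sum>i\<in>{1..n}. (1 - q i) * real (x i + 1)) - lam = w x" for x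
  proof -
    have "(1 - q i) * real (x i + 1) - mm i = (1 - q i) * (real (x i) - mm i)" if "i \<in> {1..n}" for i
      using qi[OF that] by (simp add: mm_def field_simps)
    then show ?thesis unfolding lam_def w_def by (simp add: sum_subtractf[symmetric])
  qed
  have "real (Suc k) * Pk (Suc k) - lam * Pk k
     = (\<Sum>x\<in>Tk k. (\<Sum>i\<in>{1..n}. (1 - q i) * real (x i + 1)) * pp x) - (\<Sum>x\<in>Tk k. lam * pp x)"
    by (simp only: stein Pk_eq[of k] sum_distrib_left)
  also have "\<dots> = (\<Sum>x\<in>Tk k. ((\<Sum>i\<in>{1..n}. (1 - q i) * real (x i + 1)) - lam) * pp x)"
    by (simp only: sum_subtractf[symmetric] left_diff_distrib)
  also have "\<dots> = (\<Sum>x\<in>Tk k. w x * pp x)" by (simp only: e)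
  finally show ?thesis .
qed

lemma w_lb: "w x \<ge> - Aw"
proof -
  have "- Aw = (\<Sum>i\<in>{1..n}. (1 - q i) * (0 - mm i))" by (simp add: Aw_def sum_negf)
  also have "\<dots> \<le> w x" unfolding w_def
  proof (rule sum_mono)
    fix i assume i: "i \<in> {1..n}"
    have "0 \<le> (1 - q i) * real (x i)" using qi[OF i] by simp
    then show "(1 - q i) * (0 - mm i) \<le> (1 - q i) * (real (x i) - mm i)" by (simp add: algebra_simps)
  qed
  finally show ?thesis .
qed

lemma Tlow: "real (Suc k) * Pk (Suc k) \<ge> (lam - Aw) * Pk k"
proof -
  have "- Aw * Pk k = (\<Sum>x\<in>Tk k. (- Aw) * pp x)" by (simp add: Pk_eq sum_distrib_left)
  also have "\<dots> \<le> (\<Sum>x\<in>Tk k. w x * pp x)"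
  proof (rule sum_mono)
    fix x
    show "- Aw * pp x \<le> w x * pp x" using mult_right_mono[OF w_lb, of "pp x" x] pp_pos[of x] by simp
  qed
  also have "\<dots> = real (Suc k) * Pk (Suc k) - lam * Pk k" by (simp only: Tdef)
  finally show ?thesis by (simp add: algebra_simps)
qed

lemma CS: "(real (Suc k) * Pk (Suc k) - lam * Pk k)\<^sup>2 \<le> Pk k * (\<Sum>x\<in>Tk k. (w x)\<^sup>2 * pp x)"
proof -
  have "(\<Sum>x\<in>Tk k. w x * pp x) = (\<Sum>x\<in>Tk k. sqrt (pp x) * (w x * sqrt (pp x)))"
    by (rule sum.cong) (use pp_pos in \<open>auto simp: less_imp_le mult_ac\<close>)
  then have "(\<Sum>x\<in>Tk k. w x * pp x)\<^sup>2 \<le> (\<Sum>x\<in>Tk k. (sqrt (pp x))\<^sup>2) * (\<Sum>x\<in>Tk k. (w x * sqrt (pp x))\<^sup>2)"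
    using Cauchy_Schwarz_ineq_sum by metis
  also have "\<dots> = Pk k * (\<Sum>x\<in>Tk k. (w x)\<^sup>2 * pp x)"
    using pp_pos by (simp add: Pk_eq power_mult_distrib less_imp_le)
  finally have *: "(\<Sum>x\<in>Tk k. w x * pp x)\<^sup>2 \<le> Pk k * (\<Sum>x\<in>Tk k. (w x)\<^sup>2 * pp x)" .
  show ?thesis unfolding Tdef by (rule *)
qed

end

context geo begin

definition Box :: "nat \<Rightarrow> (nat \<Rightarrow> nat) set" where "Box N = PiE {1..n} (\<lambda>_. {..<N})"
definition GG :: "nat \<Rightarrow> real" where "GG N = (\<Sum>x\<in>Box N. (w x)\<^sup>2 * pp x)"
definition ff :: "nat \<Rightarrow> nat \<Rightarrow> nat \<Rightarrow> nat \<Rightarrow> real" where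
  "ff i j l a = pg l a * (if l = i then real a - mm l else 1) * (if l = j then real a - mm l else 1)"
definition LL :: "nat \<Rightarrow> nat \<Rightarrow> nat \<Rightarrow> real" where
  "LL i j l = (if l = i \<and> l = j then (1 - q l) / (q l)\<^sup>2 else if l = i \<or> l = j then 0 else 1)"

lemma Box_fin: "finite (Box N)" by (simp add: Box_def finite_PiE)

lemma ff_lim: assumes l: "l \<in> {1..n}" shows "(\<lambda>N. \<Sum>a<N. ff i j l a) \<longlonglongrightarrow> LL i j l"
proof -
  have q: "0 < q l" "q l < 1" using qi[OF l] by auto
  have "ff i j l sums LL i j l"
  proof (cases "l = i \<and> l = j")
    case True
    have "ff i j l = (\<lambda>a. (real a - (1 - q l) / q l)\<^sup>2 * ((1 - q l) ^ a * q l))"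
      using True by (auto simp: ff_def pg_def mm_def power2_eq_square)
    moreover have "LL i j l = (1 - q l) / (q l)\<^sup>2" using True by (simp add: LL_def)
    ultimately show ?thesis using geo_sum_var[OF q] by simp
  next
    case F1: False
    show ?thesis
    proof (cases "l = i \<or> l = j")
      case True
      have "ff i j l = (\<lambda>a. (real a - (1 - q l) / q l) * ((1 - q l) ^ a * q l))"
        using True F1 by (auto simp: ff_def pg_def mm_def)
      moreover have "LL i j l = 0" using True F1 by (auto simp: LL_def)
      ultimately show ?thesis using geo_sum_cmean[OF q] by simp
    next
      case False
      have "ff i j l = (\<lambda>a. (1 - q l) ^ a * q l)"
        using False by (auto simp: ff_def pg_def)
      moreover have "LL i j l = 1" using False by (auto simp: LL_def)
      ultimately show ?thesis using geo_sum0[OF q] by simp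
    qed
  qed
  then show ?thesis by (simp add: sums_def)
qed

lemma LL_prod: assumes "i \<in> {1..n}" "j \<in> {1..n}"
  shows "(\<Prod>l\<in>{1..n}. LL i j l) = (if i = j then (1 - q i) / (q i)\<^sup>2 else 0)"
proof (cases "i = j")
  case True
  then have "(\<Prod>l\<in>{1..n}. LL i j l) = (\<Prod>l\<in>{1..n}. if l = i then (1 - q l) / (q l)\<^sup>2 else 1)"
    by (intro prod.cong) (auto simp: LL_def)
  then show ?thesis using True assms by simp
next
  case False
  have "LL i j i = 0" using False by (simp add: LL_def)
  then have "(\<Prod>l\<in>{1..n}. LL i j l) = 0" using assms by (intro prod_zero) auto
  then show ?thesis using False by simp
qed

lemma HH_eq: assumes "i \<in> {1..n}" "j \<in> {1..n}"
  shows "(\<Sum>x\<in>Box N. (real (x i) - mm i) * (real (x j) - mm j) * pp x) = (\<Prod>l\<in>{1..n}. \<Sum>a<N. ff i j l a)"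
proof -
  have "(\<Sum>x\<in>Box N. (real (x i) - mm i) * (real (x j) - mm j) * pp x) = (\<Sum>x\<in>Box N. \<Prod>l\<in>{1..n}. ff i j l (x l))"
  proof (rule sum.cong)
    fix x
    have "(\<Prod>l\<in>{1..n}. ff i j l (x l)) = pp x * (\<Prod>l\<in>{1..n}. if l = i then real (x l) - mm l else 1)
            * (\<Prod>l\<in>{1..n}. if l = j then real (x l) - mm l else 1)"
      by (simp add: ff_def pp_def prod.distrib del: prod.delta)
    also have "\<dots> = (real (x i) - mm i) * (real (x j) - mm j) * pp x"
      using assms by simp
    finally show "(real (x i) - mm i) * (real (x j) - mm j) * pp x = (\<Prod>l\<in>{1..n}. ff i j l (x l))" by simp
  qed simp
  also have "\<dots> = (\<Prod>l\<in>{1..n}. \<Sum>a<N. ff i j l a)"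
    unfolding Box_def by (rule prod_sum_PiE[symmetric]) auto
  finally show ?thesis .
qed

lemma GG_eq: "GG N = (\<Sum>i\<in>{1..n}. \<Sum>j\<in>{1..n}. (1 - q i) * (1 - q j) * (\<Prod>l\<in>{1..n}. \<Sum>a<N. ff i j l a))"
proof -
  have "GG N = (\<Sum>x\<in>Box N. \<Sum>i\<in>{1..n}. \<Sum>j\<in>{1..n}. (1 - q i) * (1 - q j) * ((real (x i) - mm i) * (real (x j) - mm j) * pp x))"
    unfolding GG_def w_def power2_eq_square sum_product
    by (rule sum.cong) (auto simp: sum_distrib_right sum_distrib_left mult_ac)
  also have "\<dots> = (\<Sum>i\<in>{1..n}. \<Sum>j\<in>{1..n}. (1 - q i) * (1 - q j) * (\<Sum>x\<in>Box N. (real (x i) - mm i) * (real (x j) - mm j) * pp x))"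
    by (simp add: sum.swap[of _ "Box N"] sum_distrib_left)
  also have "\<dots> = (\<Sum>i\<in>{1..n}. \<Sum>j\<in>{1..n}. (1 - q i) * (1 - q j) * (\<Prod>l\<in>{1..n}. \<Sum>a<N. ff i j l a))"
    by (intro sum.cong refl) (simp add: HH_eq)
  finally show ?thesis .
qed

lemma GG_lim: "GG \<longlonglongrightarrow> V"
proof -
  have "(\<lambda>N. \<Sum>i\<in>{1..n}. \<Sum>j\<in>{1..n}. (1 - q i) * (1 - q j) * (\<Prod>l\<in>{1..n}. \<Sum>a<N. ff i j l a))
     \<longlonglongrightarrow> (\<Sum>i\<in>{1..n}. \<Sum>j\<in>{1..n}. (1 - q i) * (1 - q j) * (\<Prod>l\<in>{1..n}. LL i j l))"
    by (intro tendsto_sum tendsto_mult_left tendsto_prod ff_lim) auto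
  also have "(\<Sum>i\<in>{1..n}. \<Sum>j\<in>{1..n}. (1 - q i) * (1 - q j) * (\<Prod>l\<in>{1..n}. LL i j l))
      = (\<Sum>i\<in>{1..n}. \<Sum>j\<in>{1..n}. if i = j then (1 - q i) * (1 - q i) * ((1 - q i) / (q i)\<^sup>2) else 0)"
  proof (intro sum.cong refl)
    fix i j assume "i \<in> {1..n}" "j \<in> {1..n}"
    then show "(1 - q i) * (1 - q j) * (\<Prod>l\<in>{1..n}. LL i j l)
      = (if i = j then (1 - q i) * (1 - q i) * ((1 - q i) / (q i)\<^sup>2) else 0)"
      using LL_prod[of i j] by simp
  qed
  also have "\<dots> = V"
    unfolding V_def by (intro sum.cong refl) (auto simp: power3_eq_cube)
  finally show ?thesis by (simp add: GG_eq[abs_def])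
qed

lemma nnw: "(w x)\<^sup>2 * pp x \<ge> 0" using pp_pos[of x] by simp

lemma GG_inc: "incseq GG"
proof (rule incseq_SucI)
  fix N
  have "Box N \<subseteq> Box (Suc N)" unfolding Box_def by (auto simp: PiE_def Pi_def)
  then show "GG N \<le> GG (Suc N)" unfolding GG_def
    by (intro sum_mono2 Box_fin) (use nnw in auto)
qed

lemma W_bound: "(\<Sum>k<N. \<Sum>x\<in>Tk k. (w x)\<^sup>2 * pp x) \<le> V"
proof -
  have disj: "\<forall>k\<in>{..<N}. \<forall>k'\<in>{..<N}. k \<noteq> k' \<longrightarrow> Tk k \<inter> Tk k' = {}" by (auto simp: Tk_def)
  have "(\<Sum>k<N. \<Sum>x\<in>Tk k. (w x)\<^sup>2 * pp x) = (\<Sum>x\<in>(\<Union>k\<in>{..<N}. Tk k). (w x)\<^sup>2 * pp x)"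
    by (rule sum.UNION_disjoint[symmetric]) (use disj Tk_fin in auto)
  also have "\<dots> \<le> GG N" unfolding GG_def
  proof (rule sum_mono2[OF Box_fin])
    show "(\<Union>k\<in>{..<N}. Tk k) \<subseteq> Box N"
    proof
      fix x assume "x \<in> (\<Union>k\<in>{..<N}. Tk k)"
      then obtain k where k: "k < N" "x \<in> Tk k" by auto
      have "x \<in> PiE {1..n} (\<lambda>_. {..k})" using Tk_sub k(2) by blast
      then show "x \<in> Box N" using k(1) unfolding Box_def by (auto simp: PiE_def Pi_def)
    qed
  qed (use nnw in auto)
  also have "\<dots> \<le> V" by (rule incseq_le[OF GG_inc GG_lim])
  finally show ?thesis .
qed

end

lemma sq_bound:
  fixes a b :: real assumes b: "0 < b" and ab: "b / 4 \<le> a"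
  shows "(sqrt a - sqrt b)\<^sup>2 \<le> (a - b)\<^sup>2 / (2 * b)"
proof -
  define s where "s = sqrt a"
  define t where "t = sqrt b"
  have t0: "t > 0" using b by (simp add: t_def)
  have a0: "a \<ge> 0" using b ab by linarith
  have "sqrt (b / 4) \<le> s" unfolding s_def using ab by (rule real_sqrt_le_mono)
  moreover have "sqrt (b / 4) = t / 2" by (simp add: t_def real_sqrt_divide)
  ultimately have st: "s \<ge> t / 2" by simp
  have s2: "s\<^sup>2 = a" using a0 by (simp add: s_def)
  have t2: "t\<^sup>2 = b" using b by (simp add: t_def)
  have "2 * t\<^sup>2 \<le> (s + t)\<^sup>2"
  proof -
    have "3 * t / 2 \<le> s + t" using st by simp
    then have "(3 * t / 2)\<^sup>2 \<le> (s + t)\<^sup>2" using t0 by (intro power_mono) auto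
    moreover have "2 * t\<^sup>2 \<le> (3 * t / 2)\<^sup>2" by (simp add: power2_eq_square)
    ultimately show ?thesis by linarith
  qed
  then have "(s - t)\<^sup>2 * (2 * t\<^sup>2) \<le> (s - t)\<^sup>2 * (s + t)\<^sup>2" by (intro mult_left_mono) auto
  also have "(s - t)\<^sup>2 * (s + t)\<^sup>2 = (a - b)\<^sup>2"
    using s2 t2 by (simp add: power_mult_distrib[symmetric] algebra_simps power2_eq_square)
  finally have "(s - t)\<^sup>2 * (2 * b) \<le> (a - b)\<^sup>2" using t2 by simp
  then show ?thesis using b unfolding s_def t_def by (simp add: field_simps)
qed

lemma poisson_tv_le2:
  fixes P :: "nat \<Rightarrow> real" and l :: real
  assumes l: "l > 0" and P0: "\<And>k. P k \<ge> 0" and Psum: "P sums 1"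
  shows "tv_nat P (pmf (poisson_pmf l)) \<le> 2"
proof -
  define po where "po k = l ^ k / fact k * exp (- l)" for k
  have pmfeq: "pmf (poisson_pmf l) = po" using l by (auto simp: po_def)
  have po_pos: "po k > 0" for k using l by (simp add: po_def)
  have po_sums: "po sums 1"
  proof -
    have "(\<lambda>n. l ^ n / fact n) sums exp l"
      using exp_converges[of l] by (simp add: scaleR_conv_of_real divide_inverse mult.commute)
    then have "(\<lambda>n. l ^ n / fact n * exp (- l)) sums (exp l * exp (- l))" by (rule sums_mult2)
    moreover have "po = (\<lambda>n. l ^ n / fact n * exp (- l))" by (rule ext) (simp add: po_def)
    ultimately show ?thesis by (simp add: exp_minus_inverse)
  qed
  have s2: "(\<lambda>k. P k + po k) sums 2" using sums_add[OF Psum po_sums] by simp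
  have Tsum: "summable (\<lambda>k. \<bar>P k - po k\<bar>)"
  proof (rule summable_comparison_test)
    show "\<exists>N. \<forall>n\<ge>N. norm \<bar>P n - po n\<bar> \<le> P n + po n"
      using P0 po_pos by (auto intro!: exI[of _ 0] simp: abs_le_iff less_imp_le)
    show "summable (\<lambda>n. P n + po n)" using s2 by (simp add: sums_iff)
  qed
  have "(\<Sum>k. \<bar>P k - po k\<bar>) \<le> (\<Sum>k. P k + po k)"
    by (rule suminf_le[OF _ Tsum]) (use P0 po_pos s2 in \<open>auto simp: abs_le_iff less_imp_le sums_iff\<close>)
  also have "\<dots> = 2" using s2 by (simp add: sums_iff)
  finally show ?thesis by (simp add: tv_nat_def pmfeq)
qed

lemma tang0:
  fixes q :: real assumes q: "0 < q" "q < 1"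
  shows "15 * ((1 - q) * ((1 - q) / q)) - 9 * ((1 - q) / q) \<le> (1 - q) ^ 3 / q\<^sup>2"
proof -
  have e1: "15 * ((1 - q) * ((1 - q) / q)) - 9 * ((1 - q) / q) = ((15 * (1 - q) - 9) * (1 - q) * q) / q\<^sup>2"
    using q by (simp add: power2_eq_square divide_simps) (simp add: algebra_simps)
  have "(15 * (1 - q) - 9) * (1 - q) * q \<le> (1 - q) ^ 3"
  proof -
    have "(1 - q) ^ 3 - (15 * (1 - q) - 9) * (1 - q) * q = (1 - q) * (4 * (1 - q) - 3)\<^sup>2"
      by (simp add: power2_eq_square power3_eq_cube algebra_simps)
    moreover have "(1 - q) * (4 * (1 - q) - 3)\<^sup>2 \<ge> 0" using q by simp
    ultimately show ?thesis by linarith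
  qed
  then show ?thesis unfolding e1 using q by (intro divide_right_mono) auto
qed

context geo begin

lemma Sk_eq: "{\<omega> \<in> space M. (\<Sum>i\<in>{1..n}. X i \<omega>) = k} = (\<Union>x\<in>Tk k. Ev x)"
proof (intro equalityI subsetI)
  fix \<omega> assume w: "\<omega> \<in> {\<omega> \<in> space M. (\<Sum>i\<in>{1..n}. X i \<omega>) = k}"
  define x where "x = restrict (\<lambda>i. X i \<omega>) {1..n}"
  have "x \<in> Tk k" using w unfolding Tk_def x_def by auto
  moreover have "\<omega> \<in> Ev x" using w unfolding Ev_def x_def by auto
  ultimately show "\<omega> \<in> (\<Union>x\<in>Tk k. Ev x)" by blast
next
  fix \<omega> assume "\<omega> \<in> (\<Union>x\<in>Tk k. Ev x)"
  then obtain x where x: "x \<in> Tk k" "\<omega> \<in> Ev x" by blast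
  then have "(\<Sum>i\<in>{1..n}. X i \<omega>) = sum x {1..n}" unfolding Ev_def by (auto intro!: sum.cong)
  then show "\<omega> \<in> {\<omega> \<in> space M. (\<Sum>i\<in>{1..n}. X i \<omega>) = k}" using x unfolding Ev_def Tk_def by auto
qed

lemma Psum: "Pk sums 1"
proof -
  define A where "A k = {\<omega> \<in> space M. (\<Sum>i\<in>{1..n}. X i \<omega>) = k}" for k
  have As: "range A \<subseteq> sets M"
  proof
    fix B assume "B \<in> range A"
    then obtain k where "B = A k" by blast
    then show "B \<in> sets M" unfolding A_def Sk_eq using Tk_fin Ev_sets by auto
  qed
  have Ad: "disjoint_family A" unfolding disjoint_family_on_def A_def by auto
  have "(\<Union>k. A k) = space M" unfolding A_def by auto
  then have "(\<lambda>k. measure M (A k)) sums 1"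
    using finite_measure_UNION[OF As Ad] by (simp add: prob_space)
  then show ?thesis by (simp add: A_def Pk_def[abs_def])
qed

lemma mm_pos: "i \<in> {1..n} \<Longrightarrow> mm i > 0" using qi[of i] by (simp add: mm_def)

lemma lam_pos: "lam > 0"
  unfolding lam_def using n1 mm_pos by (intro sum_pos) auto

lemma tv_main: "tv_nat Pk (pmf (poisson_pmf lam)) \<le> sqrt (2 / lam * V)"
proof (cases "Aw \<le> 3 / 4 * lam")
  case True
  have bnd: "(\<Sum>k<N. (sqrt (real (Suc k) * Pk (Suc k)) - sqrt (lam * Pk k))\<^sup>2) \<le> V / (2 * lam)" for N
  proof -
    have "(\<Sum>k<N. (sqrt (real (Suc k) * Pk (Suc k)) - sqrt (lam * Pk k))\<^sup>2)
        \<le> (\<Sum>k<N. (\<Sum>x\<in>Tk k. (w x)\<^sup>2 * pp x) / (2 * lam))"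
    proof (rule sum_mono)
      fix k
      have b: "lam * Pk k > 0" using lam_pos Pk_pos by simp
      have "lam * Pk k / 4 \<le> (lam - Aw) * Pk k"
      proof -
        have "lam / 4 \<le> lam - Aw" using True by linarith
        then have "lam / 4 * Pk k \<le> (lam - Aw) * Pk k"
          by (rule mult_right_mono) (use Pk_pos[of k] in simp)
        then show ?thesis by simp
      qed
      also have "\<dots> \<le> real (Suc k) * Pk (Suc k)" by (rule Tlow)
      finally have ab: "lam * Pk k / 4 \<le> real (Suc k) * Pk (Suc k)" .
      have "(sqrt (real (Suc k) * Pk (Suc k)) - sqrt (lam * Pk k))\<^sup>2
          \<le> (real (Suc k) * Pk (Suc k) - lam * Pk k)\<^sup>2 / (2 * (lam * Pk k))"
        by (rule sq_bound[OF b ab])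
      also have "\<dots> \<le> Pk k * (\<Sum>x\<in>Tk k. (w x)\<^sup>2 * pp x) / (2 * (lam * Pk k))"
        using b by (intro divide_right_mono CS) auto
      also have "\<dots> = (\<Sum>x\<in>Tk k. (w x)\<^sup>2 * pp x) / (2 * lam)"
        using Pk_pos[of k] by (simp add: field_simps)
      finally show "(sqrt (real (Suc k) * Pk (Suc k)) - sqrt (lam * Pk k))\<^sup>2
          \<le> (\<Sum>x\<in>Tk k. (w x)\<^sup>2 * pp x) / (2 * lam)" .
    qed
    also have "\<dots> = (\<Sum>k<N. \<Sum>x\<in>Tk k. (w x)\<^sup>2 * pp x) / (2 * lam)" by (simp add: sum_divide_distrib)
    also have "\<dots> \<le> V / (2 * lam)" using lam_pos by (intro divide_right_mono W_bound) auto
    finally show ?thesis .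
  qed
  have "tv_nat Pk (pmf (poisson_pmf lam)) \<le> 2 * sqrt (V / (2 * lam))"
    by (rule poisson_tv_bound[OF lam_pos _ Psum bnd]) (use Pk_pos in \<open>auto intro: less_imp_le\<close>)
  also have "2 * sqrt (V / (2 * lam)) = sqrt (2 / lam * V)"
  proof -
    have "2 * sqrt (V / (2 * lam)) = sqrt (2\<^sup>2) * sqrt (V / (2 * lam))" by simp
    also have "\<dots> = sqrt (2\<^sup>2 * (V / (2 * lam)))" by (rule real_sqrt_mult[symmetric])
    also have "2\<^sup>2 * (V / (2 * lam)) = 2 / lam * V" using lam_pos by (simp add: field_simps power2_eq_square)
    finally show ?thesis .
  qed
  finally show ?thesis .
next
  case False
  have tang: "(1 - q i) ^ 3 / (q i)\<^sup>2 \<ge> 15 * ((1 - q i) * mm i) - 9 * mm i" if i: "i \<in> {1..n}" for i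
    using tang0[of "q i"] qi[OF i] by (simp add: mm_def)
  have "V \<ge> 15 * Aw - 9 * lam"
  proof -
    have "15 * Aw - 9 * lam = (\<Sum>i\<in>{1..n}. 15 * ((1 - q i) * mm i) - 9 * mm i)"
      by (simp add: Aw_def lam_def sum_subtractf sum_distrib_left)
    also have "\<dots> \<le> V" unfolding V_def by (rule sum_mono) (rule tang)
    finally show ?thesis .
  qed
  then have V2: "V \<ge> 2 * lam" using False lam_pos by linarith
  have "tv_nat Pk (pmf (poisson_pmf lam)) \<le> 2"
    by (rule poisson_tv_le2[OF lam_pos _ Psum]) (use Pk_pos in \<open>auto intro: less_imp_le\<close>)
  also have "2 \<le> sqrt (2 / lam * V)"
  proof -
    have "4 \<le> 2 / lam * V" using V2 lam_pos by (simp add: field_simps)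
    then have "sqrt 4 \<le> sqrt (2 / lam * V)" by (rule real_sqrt_le_mono)
    moreover have "sqrt 4 = (2::real)" by (simp add: real_sqrt_eq_iff)
    ultimately show ?thesis by simp
  qed
  finally show ?thesis .
qed

end

lemma t1: fixes N c :: real assumes "N > 0" "c > 0"
  shows "(1 - N / (N + c)) / (N / (N + c)) = c / N"
proof -
  have "1 - N / (N + c) = c / (N + c)" using assms by (simp add: field_simps)
  then show ?thesis using assms by simp
qed
lemma t2: fixes N c :: real assumes "N > 0" "c > 0"
  shows "(1 - N / (N + c)) ^ 3 / (N / (N + c))\<^sup>2 = c ^ 3 / ((N + c) * N\<^sup>2)"
proof -
  have "1 - N / (N + c) = c / (N + c)" using assms by (simp add: field_simps)
  then have "(1 - N / (N + c)) ^ 3 / (N / (N + c))\<^sup>2 = (c / (N + c)) ^ 3 / (N / (N + c))\<^sup>2" by simp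
  also have "\<dots> = c ^ 3 / (N + c) ^ 3 * ((N + c) ^ 2 / N ^ 2)" by (simp add: power_divide)
  also have "\<dots> = c ^ 3 / ((N + c) * N\<^sup>2)" using assms by (simp add: power2_eq_square power3_eq_cube)
  finally show ?thesis .
qed
lemma t3: fixes N c :: real assumes "N > 0" "c > 0"
  shows "N * (c ^ 3 / ((N + c) * N\<^sup>2)) = c ^ 3 / (N * (N + c))"
  using assms by (simp add: power2_eq_square)
lemma t4: fixes N c :: real assumes "N > 0" "c > 0"
  shows "2 / c * (c ^ 3 / (N * (N + c))) = 2 * c\<^sup>2 / (N * (N + c))"
  using assms by (simp add: power2_eq_square power3_eq_cube)
lemma t5: fixes q :: real and x :: nat assumes "0 < q" "q < 1"
  shows "real (x + 1) * ((1 - q) ^ (x + 1) * q) / ((1 - q) / q * ((1 - q) ^ x * q)) = real (Suc x) * q"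
proof -
  have d: "(1 - q) / q * ((1 - q) ^ x * q) = (1 - q) ^ (x + 1)" using assms by simp
  have nz: "(1 - q) ^ (x + 1) \<noteq> 0" using assms by simp
  show ?thesis unfolding d using nz by simp
qed

context geo begin

lemma distX: assumes i: "i \<in> {1..n}"
  shows "distr M (count_space UNIV) (X i) = measure_pmf (geometric_pmf (q i))"
proof (rule measure_eqI_countable[where A = UNIV])
  show "sets (distr M (count_space UNIV) (X i)) = Pow UNIV" by simp
  show "sets (measure_pmf (geometric_pmf (q i))) = Pow UNIV" by simp
  show "countable (UNIV :: nat set)" by simp
  fix a :: nat
  have q: "0 < q i" "q i \<le> 1" using qi[OF i] by auto
  have "emeasure (distr M (count_space UNIV) (X i)) {a} = emeasure M (X i -` {a} \<inter> space M)"
    by (rule emeasure_distr[OF rv[OF i]]) simp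
  also have "X i -` {a} \<inter> space M = {\<omega> \<in> space M. X i \<omega> = a}" by auto
  also have "emeasure M {\<omega> \<in> space M. X i \<omega> = a} = ennreal (measure M {\<omega> \<in> space M. X i \<omega> = a})"
    by (simp add: emeasure_eq_measure)
  also have "measure M {\<omega> \<in> space M. X i \<omega> = a} = (1 - q i) ^ a * q i" using geom i by auto
  also have "ennreal ((1 - q i) ^ a * q i) = emeasure (measure_pmf (geometric_pmf (q i))) {a}"
    using q by (simp add: emeasure_pmf_single)
  finally show "emeasure (distr M (count_space UNIV) (X i)) {a} = emeasure (measure_pmf (geometric_pmf (q i))) {a}" .
qed

lemma int_X:
  assumes i: "i \<in> {1..n}" and f0: "\<And>a. f a \<ge> 0" and fs: "(\<lambda>a. f a * pg i a) sums s"
  shows "integral\<^sup>L M (\<lambda>\<omega>. f (X i \<omega>)) = s"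
proof -
  have q: "0 < q i" "q i \<le> 1" using qi[OF i] by auto
  have "integral\<^sup>L M (\<lambda>\<omega>. f (X i \<omega>)) = integral\<^sup>L (distr M (count_space UNIV) (X i)) f"
    by (rule integral_distr[OF rv[OF i], symmetric]) simp
  also have "\<dots> = integral\<^sup>L (density (count_space UNIV) (pmf (geometric_pmf (q i)))) f"
    by (simp add: distX[OF i] measure_pmf_eq_density)
  also have "\<dots> = integral\<^sup>L (count_space UNIV) (\<lambda>a. pmf (geometric_pmf (q i)) a *\<^sub>R f a)"
    by (rule integral_density) auto
  also have "(\<lambda>a. pmf (geometric_pmf (q i)) a *\<^sub>R f a) = (\<lambda>a. f a * pg i a)"
    using q by (auto simp: pg_def)
  also have "integral\<^sup>L (count_space UNIV) (\<lambda>a. f a * pg i a) = (\<Sum>a. f a * pg i a)"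
  proof (rule integral_count_space_nat)
    have "summable (\<lambda>a. f a * pg i a)" using fs by (simp add: sums_iff)
    moreover have "norm (f a * pg i a) = f a * pg i a" for a
      using f0[of a] pg_pos[OF i, of a] by simp
    ultimately show "integrable (count_space UNIV) (\<lambda>a. f a * pg i a)"
      by (simp add: integrable_count_space_nat_iff)
  qed
  also have "\<dots> = s" using fs by (simp add: sums_iff)
  finally show ?thesis .
qed

lemma fisher: assumes i: "i \<in> {1..n}"
  shows "scaled_fisher M (X i) = (1 - q i)\<^sup>2 / q i"
proof -
  have q: "0 < q i" "q i < 1" using qi[OF i] by auto
  have m: "integral\<^sup>L M (\<lambda>\<omega>. real (X i \<omega>)) = (1 - q i) / q i"
    by (rule int_X[OF i]) (use geo_sum_mean[OF q] in \<open>auto simp: pg_def\<close>)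
  have P: "measure M {\<omega> \<in> space M. X i \<omega> = x} = (1 - q i) ^ x * q i" for x using geom i by auto
  have rho: "real (x + 1) * measure M {\<omega> \<in> space M. X i \<omega> = x + 1} /
          ((1 - q i) / q i * measure M {\<omega> \<in> space M. X i \<omega> = x}) - 1 = real (Suc x) * q i - 1" for x
  proof -
    have "real (x + 1) * ((1 - q i) ^ (x + 1) * q i) / ((1 - q i) / q i * ((1 - q i) ^ x * q i))
        = real (Suc x) * q i"
      by (rule t5[OF q])
    then show ?thesis by (simp add: P)
  qed
  have I2: "integral\<^sup>L M (\<lambda>\<omega>. (real (Suc (X i \<omega>)) * q i - 1)\<^sup>2) = 1 - q i"
    by (rule int_X[OF i, where f = "\<lambda>a. (real (Suc a) * q i - 1)\<^sup>2"])
       (use geo_sum_fisher[OF q] in \<open>auto simp: pg_def\<close>)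
  show ?thesis
    unfolding scaled_fisher_def Let_def m rho I2 by (simp add: power2_eq_square)
qed

end

theorem mainTheorem12:
  fixes M :: "'a measure" and X :: "nat \<Rightarrow> 'a \<Rightarrow> nat"
    and q :: "nat \<Rightarrow> real" and n :: nat
  assumes "prob_space M"
    and "n \<ge> 1"
    and q01: "\<forall>i\<in>{1..n}. 0 < q i \<and> q i < 1"
    and indep: "prob_space.indep_vars M (\<lambda>_. count_space UNIV) X {1..n}"
    and geom: "\<forall>i\<in>{1..n}. \<forall>x::nat.
                 measure M {\<omega> \<in> space M. X i \<omega> = x} = (1 - q i) ^ x * q i"
  defines "S \<equiv> (\<lambda>\<omega>. \<Sum>i\<in>{1..n}. X i \<omega>)"
    and "lam \<equiv> (\<Sum>i\<in>{1..n}. (1 - q i) / q i)"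
  shows "(\<forall>i\<in>{1..n}. scaled_fisher M (X i) = (1 - q i)\<^sup>2 / q i)
    \<and> tv_nat (\<lambda>k. measure M {\<omega> \<in> space M. S \<omega> = k}) (pmf (poisson_pmf lam))
        \<le> sqrt (2 / lam * (\<Sum>i\<in>{1..n}. (1 - q i) ^ 3 / (q i)\<^sup>2))
    \<and> (\<forall>c::real. c > 0 \<longrightarrow> (\<forall>i\<in>{1..n}. q i = real n / (real n + c)) \<longrightarrow>
         tv_nat (\<lambda>k. measure M {\<omega> \<in> space M. S \<omega> = k}) (pmf (poisson_pmf c))
           \<le> sqrt 2 * c / sqrt (real n * (real n + c))
         \<and> sqrt 2 * c / sqrt (real n * (real n + c)) \<le> sqrt 2 * (c / real n))"
proof -
  interpret G: geo M X q n by (rule geo.intro) (fact assms)+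
  have Peq: "(\<lambda>k. measure M {\<omega> \<in> space M. S \<omega> = k}) = G.Pk"
    by (rule ext) (simp add: S_def G.Pk_def)
  have lameq: "lam = G.lam" by (simp add: lam_def G.lam_def G.mm_def)
  have Veq: "(\<Sum>i\<in>{1..n}. (1 - q i) ^ 3 / (q i)\<^sup>2) = G.V" by (simp add: G.V_def)
  have part1: "\<forall>i\<in>{1..n}. scaled_fisher M (X i) = (1 - q i)\<^sup>2 / q i" using G.fisher by auto
  have part2: "tv_nat (\<lambda>k. measure M {\<omega> \<in> space M. S \<omega> = k}) (pmf (poisson_pmf lam))
        \<le> sqrt (2 / lam * (\<Sum>i\<in>{1..n}. (1 - q i) ^ 3 / (q i)\<^sup>2))"
    unfolding Peq lameq Veq by (rule G.tv_main)
  have part3: "tv_nat (\<lambda>k. measure M {\<omega> \<in> space M. S \<omega> = k}) (pmf (poisson_pmf c))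
           \<le> sqrt 2 * c / sqrt (real n * (real n + c))
         \<and> sqrt 2 * c / sqrt (real n * (real n + c)) \<le> sqrt 2 * (c / real n)"
    if c: "c > 0" and qc: "\<forall>i\<in>{1..n}. q i = real n / (real n + c)" for c
  proof -
    have np: "real n > 0" using assms(2) by simp
    have l: "lam = c"
    proof -
      have "lam = (\<Sum>i\<in>{1..n}. c / real n)"
        unfolding lam_def using qc t1[OF np c] by (intro sum.cong) auto
      also have "\<dots> = c" using np by simp
      finally show ?thesis .
    qed
    have v: "(\<Sum>i\<in>{1..n}. (1 - q i) ^ 3 / (q i)\<^sup>2) = c ^ 3 / (real n * (real n + c))"
    proof -
      have "(\<Sum>i\<in>{1..n}. (1 - q i) ^ 3 / (q i)\<^sup>2) = (\<Sum>i\<in>{1..n}. c ^ 3 / ((real n + c) * (real n)\<^sup>2))"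
        using qc t2[OF np c] by (intro sum.cong) auto
      also have "\<dots> = real n * (c ^ 3 / ((real n + c) * (real n)\<^sup>2))" by simp
      also have "\<dots> = c ^ 3 / (real n * (real n + c))" by (rule t3[OF np c])
      finally show ?thesis .
    qed
    have e: "sqrt (2 / c * (c ^ 3 / (real n * (real n + c)))) = sqrt 2 * c / sqrt (real n * (real n + c))"
    proof -
      have "2 / c * (c ^ 3 / (real n * (real n + c))) = 2 * c\<^sup>2 / (real n * (real n + c))"
        by (rule t4[OF np c])
      then have "sqrt (2 / c * (c ^ 3 / (real n * (real n + c)))) = sqrt 2 * sqrt (c\<^sup>2) / sqrt (real n * (real n + c))"
        by (simp add: real_sqrt_divide real_sqrt_mult)
      then show ?thesis using c by simp
    qed
    have A: "tv_nat (\<lambda>k. measure M {\<omega> \<in> space M. S \<omega> = k}) (pmf (poisson_pmf c))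
           \<le> sqrt 2 * c / sqrt (real n * (real n + c))"
      using part2 unfolding l v e .
    have B: "sqrt 2 * c / sqrt (real n * (real n + c)) \<le> sqrt 2 * (c / real n)"
    proof -
      have "real n \<le> sqrt (real n * (real n + c))"
        using np c by (intro real_le_rsqrt) (simp add: power2_eq_square)
      then have "c / sqrt (real n * (real n + c)) \<le> c / real n"
        using np c by (intro divide_left_mono) auto
      then have "sqrt 2 * (c / sqrt (real n * (real n + c))) \<le> sqrt 2 * (c / real n)"
        by (rule mult_left_mono) simp
      then show ?thesis by simp
    qed
    show ?thesis using A B by simp
  qed
  show ?thesis using part1 part2 part3 by blast
qed

end
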